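(* Let $K=\mathbb{Q}(\sqrt{-d})$ with $d\in\{2,7,11,19,43,67,163\}$ (i.e. $K$ is an imaginary quadratic field of class number $1$ with $d\neq 1,3$). Let $L=\mathcal{O}_K=\mathbb{Z}+\mathbb{Z}\theta_d\subset\mathbb{C}\cong\mathbb{R}^2$ be the lattice of algebraic integers of $K$, where $\theta_d=\sqrt{-d}$ if $-d\equiv 2,3\pmod 4$ and $\theta_d=\frac{1+\sqrt{-d}}{2}$ if $-d\equiv 1\pmod 4$. Then for every $m>0$ such that the shell $L_m=\{x\in L: |x|^2=m\}$ is nonempty, $L_m$ is not a spherical $2$-design.
   Context: A finite nonempty set $X\subset S^{n-1}$ is a spherical $t$-design if $\frac{1}{|X|}\sum_{x\in X}f(x)=\frac{1}{|S^{n-1}|}\int_{S^{n-1}}f\,d\sigma$ for all polynomials $f$ of degree at most $t$; a finite nonempty subset $X$ of the sphere of radius $r$ is a spherical $t$-design if $\frac{1}{r}X$ is one. (For $n=2$, a finite set $\{\xi_1,\dots,\xi_N\}$ on the unit circle in $\mathbb{C}$ is a spherical $t$-design iff $\sum_i\xi_i^k=0$ for $k=1,\dots,t$.) *)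

theory Defs
  imports "HOL-Analysis.Analysis"
begin

text \<open>A polynomial of degree at most t in the two real coordinates is a linear combination of
  monomials x^i y^j with i + j \<le> t, so by linearity the defining identity is required for
  these monomials.\<close>
definition spherical_design :: "nat \<Rightarrow> complex set \<Rightarrow> bool" where
  "spherical_design t X \<longleftrightarrow>
     finite X \<and> X \<noteq> {} \<and> X \<subseteq> sphere 0 1 \<and>
     (\<forall>i j. i + j \<le> t \<longrightarrow>
        (1 / real (card X)) * (\<Sum>x\<in>X. Re x ^ i * Im x ^ j)
        = (1 / (2 * pi)) * integral {0..2*pi} (\<lambda>\<phi>. cos \<phi> ^ i * sin \<phi> ^ j))"

definition spherical_design_radius :: "nat \<Rightarrow> real \<Rightarrow> complex set \<Rightarrow> bool" where
  "spherical_design_radius t r X \<longleftrightarrow>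
     r > 0 \<and> X \<subseteq> sphere 0 r \<and> spherical_design t ((\<lambda>x. x / complex_of_real r) ` X)"

definition theta :: "int \<Rightarrow> complex" where
  "theta d = (if (- d) mod 4 \<in> {2, 3} then \<i> * complex_of_real (sqrt (real_of_int d))
              else (1 + \<i> * complex_of_real (sqrt (real_of_int d))) / 2)"

definition OK_lattice :: "int \<Rightarrow> complex set" where
  "OK_lattice d = {of_int a + of_int b * theta d | a b. True}"

definition shell :: "int \<Rightarrow> real \<Rightarrow> complex set" where
  "shell d m = {x \<in> OK_lattice d. (cmod x)^2 = m}"

end

theory Submission imports Defs "HOL-Computational_Algebra.Primes"
begin

fun FF :: "complex \<Rightarrow> complex \<Rightarrow> nat \<Rightarrow> complex" where
  "FF al be 0 = 1"
| "FF al be (Suc 0) = al + be"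
| "FF al be (Suc (Suc e)) = (al + be) * FF al be (Suc e) - al * be * FF al be e"

locale qf =
  fixes t n :: int and th :: complex
  assumes th2: "th^2 = of_int t * th - of_int n"
  and cth: "cnj th = of_int t - th"
  and imth: "Im th \<noteq> 0"
  and Dbig: "4*n - t^2 > 4"
  and t01: "0 \<le> t" "t \<le> 1"
  and small: "\<And>p x y. prime p \<Longrightarrow> 3*p^2 \<le> 4*n - t^2 \<Longrightarrow> p dvd (x^2 + t*x*y + n*y^2) \<Longrightarrow> p dvd y"
begin

definition Ok :: "complex set" where "Ok = {of_int a + of_int b * th | a b. True}"
definition Q :: "int \<Rightarrow> int \<Rightarrow> int" where "Q a b = a^2 + t*a*b + n*b^2"
definition nm :: "complex \<Rightarrow> int" where "nm z = \<lfloor>(cmod z)^2\<rfloor>"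
definition dv :: "complex \<Rightarrow> complex \<Rightarrow> bool" where "dv a b \<longleftrightarrow> (\<exists>c\<in>Ok. b = a*c)"
definition AA :: "int \<Rightarrow> complex set" where "AA k = {z\<in>Ok. nm z = k}"
definition SS :: "int \<Rightarrow> complex" where "SS k = (\<Sum>z\<in>AA k. z^2)"

lemma Ok_iff: "z \<in> Ok \<longleftrightarrow> (\<exists>a b. z = of_int a + of_int b * th)"
  by (auto simp: Ok_def)

lemma mem_Ok[intro, simp]: "of_int a + of_int b * th \<in> Ok"
  by (auto simp: Ok_def)

lemma coord_inj:
  assumes "of_int a + of_int b * th = of_int c + of_int e * th"
  shows "a = c \<and> b = e"
proof -
  have "Im (of_int a + of_int b * th) = Im (of_int c + of_int e * th)" using assms by simp
  hence "of_int b * Im th = of_int e * Im th" by simp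
  hence be: "b = e" using imth by simp
  with assms have "(of_int a :: complex) = of_int c" by simp
  thus ?thesis using be by simp
qed

lemma th_mult: "(of_int a + of_int b * th) * (of_int c + of_int e * th) =
   of_int (a*c - n*b*e) + of_int (a*e + b*c + t*b*e) * th"
proof -
  have h: "th * th = of_int t * th - of_int n" using th2 by (simp add: power2_eq_square)
  have "(of_int a + of_int b * th) * (of_int c + of_int e * th) =
     of_int a * of_int c + (of_int a * of_int e + of_int b * of_int c) * th + of_int b * of_int e * (th * th)"
    by algebra
  also have "\<dots> = of_int (a*c - n*b*e) + of_int (a*e + b*c + t*b*e) * th"
    unfolding h by (simp add: algebra_simps)
  finally show ?thesis .
qed

lemma Ok_I: "z = of_int a + of_int b * th \<Longrightarrow> z \<in> Ok"
  by simp

lemma Ok_E: assumes "z \<in> Ok" obtains a b where "z = of_int a + of_int b * th"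
  using assms unfolding Ok_iff by blast

lemma Ok_mult[intro]: "z \<in> Ok \<Longrightarrow> w \<in> Ok \<Longrightarrow> z * w \<in> Ok"
  by (metis Ok_E th_mult mem_Ok)

lemma Ok_add[intro]: "z \<in> Ok \<Longrightarrow> w \<in> Ok \<Longrightarrow> z + w \<in> Ok"
proof -
  assume "z \<in> Ok" "w \<in> Ok"
  then obtain a b c e where "z = of_int a + of_int b * th" "w = of_int c + of_int e * th"
    by (metis Ok_E)
  hence "z + w = of_int (a+c) + of_int (b+e) * th" by (simp add: algebra_simps)
  thus ?thesis by (rule Ok_I)
qed

lemma Ok_uminus[intro]: "z \<in> Ok \<Longrightarrow> - z \<in> Ok"
proof -
  assume "z \<in> Ok"
  then obtain a b where "z = of_int a + of_int b * th" by (metis Ok_E)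
  hence "- z = of_int (-a) + of_int (-b) * th" by (simp add: algebra_simps)
  thus ?thesis by (rule Ok_I)
qed

lemma Ok_diff[intro]: "z \<in> Ok \<Longrightarrow> w \<in> Ok \<Longrightarrow> z - w \<in> Ok"
  using Ok_add[of z "-w"] Ok_uminus[of w] by simp

lemma Ok_int[intro, simp]: "of_int k \<in> Ok"
  by (rule Ok_I[of _ k 0]) simp

lemma Ok_th[intro, simp]: "th \<in> Ok"
  by (rule Ok_I[of _ 0 1]) simp

lemma Ok_0[simp]: "0 \<in> Ok" using Ok_int[of 0] by simp
lemma Ok_1[simp]: "1 \<in> Ok" using Ok_int[of 1] by simp

lemma cnj_coord: "cnj (of_int a + of_int b * th) = of_int (a + t*b) + of_int (-b) * th"
  by (simp add: cth algebra_simps)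

lemma Ok_cnj[intro]: "z \<in> Ok \<Longrightarrow> cnj z \<in> Ok"
  by (metis Ok_E cnj_coord mem_Ok)


lemma norm_Q: "(of_int a + of_int b * th) * cnj (of_int a + of_int b * th) = of_int (Q a b)"
  unfolding cnj_coord th_mult Q_def by (simp add: algebra_simps power2_eq_square)

lemma cmod_Q: "(cmod (of_int a + of_int b * th))^2 = of_int (Q a b)"
proof -
  have "complex_of_real ((cmod (of_int a + of_int b * th))^2) = complex_of_real (of_int (Q a b))"
    by (simp only: complex_norm_square norm_Q of_real_of_int_eq)
  thus ?thesis by (simp only: of_real_eq_iff)
qed

lemma nm_coord: "nm (of_int a + of_int b * th) = Q a b"
  unfolding nm_def cmod_Q by simp

lemma nm_real: "z \<in> Ok \<Longrightarrow> (cmod z)^2 = of_int (nm z)"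
  by (elim Ok_E) (simp only: cmod_Q nm_coord)

lemma nm_conj: "z \<in> Ok \<Longrightarrow> z * cnj z = of_int (nm z)"
proof -
  assume z: "z \<in> Ok"
  have "z * cnj z = complex_of_real ((cmod z)^2)" by (simp only: complex_norm_square)
  also have "\<dots> = of_int (nm z)" using nm_real[OF z] by simp
  finally show ?thesis .
qed

lemma nm_mult: "z \<in> Ok \<Longrightarrow> w \<in> Ok \<Longrightarrow> nm (z*w) = nm z * nm w"
proof -
  assume z: "z \<in> Ok" and w: "w \<in> Ok"
  have "real_of_int (nm (z*w)) = (cmod (z*w))^2" using nm_real[OF Ok_mult[OF z w]] by simp
  also have "\<dots> = (cmod z)^2 * (cmod w)^2" by (simp add: norm_mult power_mult_distrib)
  also have "\<dots> = of_int (nm z * nm w)" using nm_real z w by simp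
  finally show ?thesis by linarith
qed

lemma nm_nonneg: "z \<in> Ok \<Longrightarrow> nm z \<ge> 0"
proof -
  assume "z \<in> Ok"
  hence "real_of_int (nm z) \<ge> 0" using nm_real[of z] by (metis zero_le_power2)
  thus ?thesis by simp
qed

lemma nm_zero: "z \<in> Ok \<Longrightarrow> nm z = 0 \<longleftrightarrow> z = 0"
proof -
  assume "z \<in> Ok"
  hence "(cmod z)^2 = of_int (nm z)" by (rule nm_real)
  have "nm z = 0 \<longleftrightarrow> real_of_int (nm z) = 0" by simp
  also have "\<dots> \<longleftrightarrow> (cmod z)^2 = 0" using \<open>(cmod z)^2 = of_int (nm z)\<close> by simp
  also have "\<dots> \<longleftrightarrow> z = 0" by simp
  finally show ?thesis .
qed

lemma nm_pos: "z \<in> Ok \<Longrightarrow> z \<noteq> 0 \<Longrightarrow> nm z > 0"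
  using nm_nonneg nm_zero by force

lemma nm_cnj: "nm (cnj z) = nm z"
  unfolding nm_def by simp

lemma nm_int: "nm (of_int k) = k^2"
  using nm_coord[of k 0] by (simp add: Q_def)

lemma Q4: "4 * Q a b = (2*a + t*b)^2 + (4*n - t^2) * b^2"
  unfolding Q_def by (simp add: algebra_simps power2_eq_square)

lemma Q_one: assumes "Q a b = 1" shows "b = 0 \<and> (a = 1 \<or> a = -1)"
proof -
  have e: "(2*a + t*b)^2 + (4*n - t^2) * b^2 = 4" using Q4[of a b] assms by simp
  have h: "(4*n - t^2) * b^2 \<le> 4"
  proof -
    define X where "X = (2*a + t*b)^2"
    define Y where "Y = (4*n - t^2) * b^2"
    have "X \<ge> 0" unfolding X_def by simp
    moreover have "X + Y = 4" using e unfolding X_def Y_def .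
    ultimately show ?thesis unfolding Y_def[symmetric] by linarith
  qed
  have b: "b = 0"
  proof (rule ccontr)
    assume "b \<noteq> 0"
    hence "\<bar>b\<bar> \<ge> 1" by linarith
    hence "\<bar>b\<bar> * \<bar>b\<bar> \<ge> 1 * 1" by (intro mult_mono) auto
    hence "b^2 \<ge> 1" by (simp add: power2_eq_square abs_mult_self_eq)
    hence "(4*n - t^2) * b^2 \<ge> (4*n-t^2)" using Dbig by (simp add: mult_le_cancel_left1)
    thus False using h Dbig by linarith
  qed
  hence "a^2 = 1" using assms by (simp add: Q_def)
  thus ?thesis using b by (simp add: power2_eq_1_iff)
qed

lemma Q_shift: "Q (a + p*r) (b + p*u) = Q a b + p * (2*a*r + p*r^2 + t*(a*u + r*b + p*r*u) + n*(2*b*u + p*u^2))"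
  unfolding Q_def by (simp add: algebra_simps power2_eq_square)

lemma Q_scale: "Q (v * a) (v * b) = v^2 * Q a b"
  unfolding Q_def by (simp add: algebra_simps power2_eq_square)

lemma dv_refl: "z \<in> Ok \<Longrightarrow> dv z z"
  unfolding dv_def by (rule bexI[of _ 1]) auto

lemma dv_mem: "dv a b \<Longrightarrow> a \<in> Ok \<Longrightarrow> b \<in> Ok"
  unfolding dv_def by auto

lemma dv_trans: "dv a b \<Longrightarrow> dv b c \<Longrightarrow> dv a c"
  unfolding dv_def by (metis Ok_mult mult.assoc)

lemma dv_multI: "c \<in> Ok \<Longrightarrow> dv a (a * c)"
  unfolding dv_def by auto

lemma dv_mult: "dv a b \<Longrightarrow> c \<in> Ok \<Longrightarrow> dv a (b * c)"
  unfolding dv_def by (metis Ok_mult mult.assoc)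

lemma dv_add: "dv a b \<Longrightarrow> dv a c \<Longrightarrow> dv a (b + c)"
  unfolding dv_def by (metis Ok_add distrib_left)

lemma dv_diff: "dv a b \<Longrightarrow> dv a c \<Longrightarrow> dv a (b - c)"
  unfolding dv_def by (metis Ok_diff right_diff_distrib)

lemma dv_cnj: "dv a b \<Longrightarrow> dv (cnj a) (cnj b)"
  unfolding dv_def by (metis Ok_cnj complex_cnj_mult)

lemma dv_zero: "dv a 0"
  unfolding dv_def by (rule bexI[of _ 0]) auto

lemma dv_nm: "dv a b \<Longrightarrow> a \<in> Ok \<Longrightarrow> nm a dvd nm b"
  unfolding dv_def by (metis dvd_triv_left nm_mult)

lemma dv_norm: "a \<in> Ok \<Longrightarrow> dv a (of_int (nm a))"
  using nm_conj dv_multI Ok_cnj by metis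

lemma dv_int_coord:
  assumes "p \<noteq> 0"
  shows "dv (of_int p) (of_int x + of_int y * th) \<longleftrightarrow> p dvd x \<and> p dvd y"
proof
  assume "dv (of_int p) (of_int x + of_int y * th)"
  then obtain c where c: "c \<in> Ok" "of_int x + of_int y * th = of_int p * c" unfolding dv_def by blast
  from c(1) obtain a b where ab: "c = of_int a + of_int b * th" by (rule Ok_E)
  have "of_int x + of_int y * th = of_int (p*a) + of_int (p*b) * th" using c(2) ab by (simp add: algebra_simps)
  hence "x = p*a \<and> y = p*b" by (rule coord_inj)
  thus "p dvd x \<and> p dvd y" by auto
next
  assume "p dvd x \<and> p dvd y"
  then obtain a b where "x = p*a" "y = p*b" by (auto elim!: dvdE)
  hence "of_int x + of_int y * th = of_int p * (of_int a + of_int b * th)" by (simp add: algebra_simps)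
  thus "dv (of_int p) (of_int x + of_int y * th)" unfolding dv_def by auto
qed

lemma dv_of_int_dvd: "dv a (of_int p) \<Longrightarrow> p dvd r \<Longrightarrow> dv a (of_int r)"
proof -
  assume "dv a (of_int p)" "p dvd r"
  then obtain s where "r = p * s" by (auto elim!: dvdE)
  hence "(of_int r :: complex) = of_int p * of_int s" by simp
  thus "dv a (of_int r)" using dv_mult[OF \<open>dv a (of_int p)\<close>, of "of_int s"] by simp
qed


lemma cong_int:
  assumes pe: "pe \<in> Ok" and pr: "prime (nm pe)" and z: "z \<in> Ok"
  shows "\<exists>c. dv pe (z - of_int c)"
proof -
  obtain a b where ab: "pe = of_int a + of_int b * th" using pe by (rule Ok_E)
  obtain x y where xy: "z = of_int x + of_int y * th" using z by (rule Ok_E)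
  define p where "p = nm pe"
  have pQ: "p = Q a b" unfolding p_def ab nm_coord ..
  have pp: "prime p" using pr p_def by simp
  have p1: "p > 1" using pp prime_gt_1_int by blast
  have nb: "\<not> p dvd b"
  proof
    assume pb: "p dvd b"
    have "a^2 = p - t*a*b - n*b^2" using pQ unfolding Q_def by simp
    moreover have "p dvd p - t*a*b - n*b^2" using pb by (intro dvd_diff) (auto simp: power2_eq_square)
    ultimately have "p dvd a^2" by simp
    hence pa: "p dvd a" using pp prime_dvd_power by blast
    have "p*p dvd a*a + t*(a*b) + n*(b*b)" using pa pb
      by (intro dvd_add mult_dvd_mono dvd_mult) auto
    hence "p*p dvd p" using pQ unfolding Q_def by (simp add: power2_eq_square algebra_simps)
    hence "p*p dvd p*1" by simp
    hence "p dvd 1" using p1 by (subst (asm) dvd_mult_cancel_left) auto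
    thus False using p1 by simp
  qed
  have "coprime p b" using pp nb prime_imp_coprime by blast
  then obtain u vv where uv: "u*p + vv * b = 1" using bezout_int[of p b] by (auto simp: coprime_iff_gcd_eq_1)
  have vb: "vv * b = 1 - u*p" using uv by simp
  define c where "c = x - y*a * vv"
  define C where "C = (x-c)*(a+t*b) + n*y*b"
  define T where "T = -(x-c)*b + y*a"
  have zc: "z - of_int c = of_int (x - c) + of_int y * th" by (simp add: xy)
  have prod: "(z - of_int c) * cnj pe = of_int C + of_int T * th"
    unfolding zc ab cnj_coord th_mult C_def T_def by (simp add: algebra_simps)
  have T: "T = p*(y*a*u)"
  proof -
    have "T = y*a*(1 - vv * b)" by (simp add: T_def c_def algebra_simps)
    thus ?thesis unfolding vb by (simp add: algebra_simps)
  qed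
  have bC: "b*C = p*(y - y*a*u*(a+t*b))"
  proof -
    have "b*C = y*a*(vv * b)*(a+t*b) + n*y*b^2" by (simp add: C_def c_def algebra_simps power2_eq_square)
    also have "\<dots> = y*(a^2 + t*a*b + n*b^2) - p*(y*a*u*(a+t*b))" unfolding vb by (simp add: algebra_simps power2_eq_square)
    also have "\<dots> = p*(y - y*a*u*(a+t*b))" using pQ unfolding Q_def by (simp add: algebra_simps)
    finally show ?thesis .
  qed
  have "p dvd b*C" unfolding bC by simp
  hence "p dvd C" using pp nb prime_dvd_mult_iff by blast
  then obtain C' where C': "C = p*C'" by (auto elim: dvdE)
  define w where "w = of_int C' + of_int (y*a*u) * th"
  have wO: "w \<in> Ok" unfolding w_def by (rule mem_Ok)
  have e1: "(z - of_int c) * cnj pe = of_int p * w" unfolding prod w_def C' T by (simp add: algebra_simps)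
  have e2: "pe * cnj pe = of_int p" using nm_conj[OF pe] p_def by simp
  have "(z - of_int c) * of_int p = (z - of_int c) * (pe * cnj pe)" using e2 by simp
  also have "\<dots> = (z - of_int c) * cnj pe * pe" by (simp add: mult_ac)
  finally have "(z - of_int c) * of_int p = (z - of_int c) * cnj pe * pe" .
  also have "\<dots> = of_int p * (pe * w)" unfolding e1 by (simp add: algebra_simps)
  finally have "(z - of_int c) * of_int p = (pe * w) * of_int p" by (simp add: algebra_simps)
  hence "z - of_int c = pe * w" using p1 by simp
  thus ?thesis using wO unfolding dv_def by blast
qed

lemma dv_int_nm:
  assumes "a \<in> Ok" "dv a (of_int r)" shows "nm a dvd r^2"
  using dv_nm[OF assms(2,1)] by (simp add: nm_int)

lemma prime_elem:
  assumes pe: "pe \<in> Ok" and pr: "prime (nm pe)" and z: "z \<in> Ok" and w: "w \<in> Ok"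
    and d: "dv pe (z * w)"
  shows "dv pe z \<or> dv pe w"
proof -
  obtain c where c: "dv pe (z - of_int c)" using cong_int[OF pe pr z] by blast
  obtain e where e: "dv pe (w - of_int e)" using cong_int[OF pe pr w] by blast
  have "z * w - of_int (c*e) = (z - of_int c) * w + of_int c * (w - of_int e)"
    by (simp add: algebra_simps)
  moreover have "dv pe ((z - of_int c) * w + of_int c * (w - of_int e))"
    using c e w by (metis dv_add dv_mult Ok_int mult.commute)
  ultimately have "dv pe (z * w - of_int (c*e))" by simp
  hence "dv pe (z * w - (z * w - of_int (c*e)))" using d dv_diff by blast
  hence dce: "dv pe (of_int (c*e))" by simp
  have "nm pe dvd (c*e)^2" using dv_int_nm[OF pe dce] .
  hence "nm pe dvd c*e" using pr prime_dvd_power by blast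
  hence "nm pe dvd c \<or> nm pe dvd e" using pr prime_dvd_mult_iff by blast
  moreover have np: "dv pe (of_int (nm pe))" using dv_norm[OF pe] .
  ultimately have "dv pe (of_int c) \<or> dv pe (of_int e)" using dv_of_int_dvd by blast
  thus ?thesis
  proof
    assume "dv pe (of_int c)"
    hence "dv pe ((z - of_int c) + of_int c)" using c dv_add by blast
    thus ?thesis by simp
  next
    assume "dv pe (of_int e)"
    hence "dv pe ((w - of_int e) + of_int e)" using e dv_add by blast
    thus ?thesis by simp
  qed
qed

lemma prime_elem_pow:
  assumes pe: "pe \<in> Ok" and pr: "prime (nm pe)" and w: "w \<in> Ok"
  shows "dv pe (w ^ j) \<Longrightarrow> dv pe w"
proof (induction j)
  case 0
  hence "nm pe dvd nm 1" using dv_nm pe by fastforce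
  hence "nm pe dvd 1" using nm_int[of 1] by simp
  thus ?case using pr prime_gt_1_int by fastforce
next
  case (Suc j)
  have "w ^ j \<in> Ok" using w by (induction j) auto
  hence "dv pe w \<or> dv pe (w ^ j)" using prime_elem[OF pe pr w] Suc.prems by simp
  thus ?case using Suc.IH by blast
qed


definition inert :: "int \<Rightarrow> bool" where
  "inert p \<longleftrightarrow> (\<forall>z\<in>Ok. p dvd nm z \<longrightarrow> dv (of_int p) z)"

lemma descent:
  assumes pp: "prime p"
    and IH: "\<And>q. prime q \<Longrightarrow> q < p \<Longrightarrow> inert q \<or> (\<exists>r\<in>Ok. nm r = q)"
  shows "\<forall>k w. nat k = N \<longrightarrow> w \<in> Ok \<longrightarrow> nm w = p*k \<longrightarrow> 0<k \<longrightarrow> k<p \<longrightarrow> (\<exists>r\<in>Ok. nm r = p)"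
proof (induction N rule: less_induct)
  case (less N)
  show ?case
  proof (intro allI impI)
    fix k w assume N: "nat k = N" and w: "w \<in> Ok" and nw: "nm w = p*k" and k0: "0<k" and kp: "k<p"
    show "\<exists>r\<in>Ok. nm r = p"
    proof (cases "k = 1")
      case True thus ?thesis using w nw by auto
    next
      case False
      have "\<not> is_unit k" using False k0 by simp
      then obtain q where q: "q dvd k" "prime q" using prime_divisor_exists[of k] k0 by auto
      have qk: "q \<le> k" using zdvd_imp_le q(1) k0 .
      hence qp: "q < p" using kp by simp
      have q1: "q > 1" using prime_gt_1_int q(2) .
      have qnp: "\<not> q dvd p" using primes_dvd_imp_eq[OF q(2) pp] qp by auto
      obtain k1 where k1: "k = q*k1" using q(1) by (auto elim: dvdE)
      have k1pos: "k1 > 0" using k0 k1 q1 by (simp add: zero_less_mult_iff)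
      have k1lt: "k1 < k" using k1 k1pos q1 by (simp add: mult_less_cancel_right1) 
      from IH[OF q(2) qp] show ?thesis
      proof
        assume iq: "inert q"
        have "q dvd nm w" using nw k1 by simp
        hence "dv (of_int q) w" using iq w unfolding inert_def by blast
        then obtain w' where w': "w' \<in> Ok" "w = of_int q * w'" unfolding dv_def by blast
        have e0: "nm w = q * (q * nm w')" using w' nm_mult[of "of_int q" w'] nm_int by (simp add: power2_eq_square)
        have "nm w = q * (p * k1)" using nw k1 by (metis mult.left_commute)
        hence "q * (q * nm w') = q * (p * k1)" using e0 by simp
        hence e: "q * nm w' = p*k1" using q1 by simp
        hence "q dvd p*k1" by (metis dvd_triv_left)
        hence "q dvd k1" using q(2) qnp prime_dvd_mult_iff by blast
        then obtain k2 where k2: "k1 = q*k2" by (auto elim: dvdE)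
        have "q*nm w' = q*(p*k2)" using e k2 by (simp add: algebra_simps)
        hence nw': "nm w' = p*k2" using q1 by simp
        have k2pos: "k2 > 0" using k1pos k2 q1 by (simp add: zero_less_mult_iff)
        have "k2 < k1" using k2 k2pos q1 by (simp add: mult_less_cancel_right1)
        hence "nat k2 < N" using N k1lt k2pos by linarith
        thus ?thesis using less.IH[of "nat k2"] w'(1) nw' k2pos kp k1lt \<open>k2 < k1\<close> by auto
      next
        assume "\<exists>r\<in>Ok. nm r = q"
        then obtain r where r: "r \<in> Ok" "nm r = q" by blast
        have pr: "prime (nm r)" using r q(2) by simp
        have wc: "w * cnj w = of_int (p*k)" using nm_conj[OF w] nw by simp
        have d1: "dv r (of_int (p*k))" by (rule dv_of_int_dvd[OF dv_norm[OF r(1)]]) (use r(2) q(1) in simp)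
        have "dv r (w * cnj w)" unfolding wc by (rule d1)
        hence "dv r w \<or> dv r (cnj w)" using prime_elem[OF r(1) pr w Ok_cnj[OF w]] by simp
        hence "\<exists>r'. r' \<in> Ok \<and> nm r' = q \<and> dv r' w"
        proof
          assume "dv r w" thus ?thesis using r by blast
        next
          assume "dv r (cnj w)"
          hence "dv (cnj r) w" using dv_cnj by fastforce
          thus ?thesis using r nm_cnj Ok_cnj by blast
        qed
        then obtain r' where r': "r' \<in> Ok" "nm r' = q" "dv r' w" by blast
        then obtain w' where w': "w' \<in> Ok" "w = r' * w'" unfolding dv_def by blast
        have e0: "nm w = q * nm w'" using nm_mult[OF r'(1) w'(1)] w'(2) r'(2) by simp
        have "nm w = q * (p * k1)" using nw k1 by (metis mult.left_commute)
        hence "q * nm w' = q * (p*k1)" using e0 by simp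
        hence nw': "nm w' = p*k1" using q1 by simp
        have "nat k1 < N" using N k1lt k1pos by linarith
        thus ?thesis using less.IH[of "nat k1"] w'(1) nw' k1pos kp k1lt by auto
      qed
    qed
  qed
qed

lemma split_or_inert:
  shows "\<forall>p. nat p = N \<longrightarrow> prime p \<longrightarrow> inert p \<or> (\<exists>r\<in>Ok. nm r = p)"
proof (induction N rule: less_induct)
  case (less N)
  show ?case
  proof (intro allI impI)
    fix p assume N: "nat p = N" and pp: "prime p"
    have p1: "p > 1" using prime_gt_1_int pp .
    have IH: "\<And>q. prime q \<Longrightarrow> q < p \<Longrightarrow> inert q \<or> (\<exists>r\<in>Ok. nm r = q)"
    proof -
      fix q :: int assume "prime q" "q < p"
      moreover have "q > 1" using prime_gt_1_int \<open>prime q\<close> .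
      ultimately show "inert q \<or> (\<exists>r\<in>Ok. nm r = q)" using less.IH[of "nat q"] N by auto
    qed
    show "inert p \<or> (\<exists>r\<in>Ok. nm r = p)"
    proof (cases "inert p")
      case True thus ?thesis by simp
    next
      case False
      then obtain z where z: "z \<in> Ok" "p dvd nm z" "\<not> dv (of_int p) z" unfolding inert_def by blast
      obtain x y where xy: "z = of_int x + of_int y * th" using z(1) by (rule Ok_E)
      have pQ: "p dvd Q x y" using z(2) xy nm_coord by simp
      have ny: "\<not> p dvd y"
      proof
        assume py: "p dvd y"
        have "x^2 = Q x y - t*x*y - n*y^2" unfolding Q_def by simp
        moreover have "p dvd Q x y - t*x*y - n*y^2" using pQ py by (intro dvd_diff) (auto simp: power2_eq_square)
        ultimately have "p dvd x^2" by simp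
        hence "p dvd x" using pp prime_dvd_power by blast
        hence "dv (of_int p) z" using py xy dv_int_coord p1 by simp
        thus False using z(3) by simp
      qed
      have big: "4*n - t^2 < 3*p^2"
      proof (rule ccontr)
        assume "\<not> ?thesis" hence "3*p^2 \<le> 4*n - t^2" by simp
        hence "p dvd y" using small[OF pp] pQ unfolding Q_def by blast
        thus False using ny by simp
      qed
      have "coprime p y" using pp ny prime_imp_coprime by blast
      then obtain u vv where uv: "u*p + vv * y = 1" using bezout_int[of p y] by (auto simp: coprime_iff_gcd_eq_1)
      define x0 where "x0 = x * vv"
      define j where "j = (2*x0 + t + p) div (2*p)"
      define c where "c = x0 - p*j"
      have e: "(2*x0+t+p) mod (2*p) + j * (2*p) = 2*x0+t+p" using mod_div_mult_eq[of "2*x0 + t + p" "2*p"] unfolding j_def .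
      have "2*c+t+p = (2*x0+t+p) - j*(2*p)" by (simp add: c_def algebra_simps)
      hence m: "2*c + t + p = (2*x0 + t + p) mod (2*p)" using e by linarith
      have "0 \<le> (2*x0 + t + p) mod (2*p)" "(2*x0 + t + p) mod (2*p) < 2*p" using p1 by simp_all
      hence "\<bar>2*c+t\<bar> \<le> \<bar>p\<bar>" using m p1 by linarith
      hence sq: "(2*c+t)^2 \<le> p^2" by (simp only: abs_le_square_iff)
      define w where "w = of_int c + th"
      have wO: "w \<in> Ok" unfolding w_def by (rule Ok_I[of _ c 1]) simp
      have w1: "w = of_int c + of_int 1 * th" by (simp add: w_def)
      have nwq: "nm w = Q c 1" unfolding w1 by (rule nm_coord)
      have Q41: "4*Q c 1 = (2*c+t)^2 + (4*n - t^2)" using Q4[of c 1] by (simp only: mult_1_right one_power2)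
      have Qlt: "Q c 1 < p^2" using Q41 sq big by linarith
      have w0: "w \<noteq> 0"
      proof
        assume "w = 0"
        hence "of_int c + of_int 1 * th = of_int 0 + of_int 0 * th" by (simp add: w_def)
        hence "c = 0 \<and> (1::int) = 0" by (rule coord_inj)
        thus False by simp
      qed
      have Qpos: "Q c 1 > 0" using nm_pos[OF wO w0] nwq by simp
      have one: "vv * y + p*u = 1" using uv by (simp add: algebra_simps)
      have cc: "c = x0 + p*(-j)" by (simp add: c_def)
      have "Q c 1 = Q (x0 + p*(-j)) (vv * y + p*u)" by (simp only: cc one)
      also have "\<dots> = Q x0 (vv * y) + p * (2*x0*(-j) + p*(-j)^2 + t*(x0*u + (-j)*(vv * y) + p*(-j)*u) + n*(2*(vv * y)*u + p*u^2))"
        by (rule Q_shift)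
      finally have qc: "Q c 1 = Q x0 (vv * y) + p * (2*x0*(-j) + p*(-j)^2 + t*(x0*u + (-j)*(vv * y) + p*(-j)*u) + n*(2*(vv * y)*u + p*u^2))" .
      have "Q x0 (vv * y) = vv^2 * Q x y" unfolding x0_def using Q_scale[of vv x y] by (simp add: mult.commute)
      hence "p dvd Q x0 (vv * y)" using pQ by simp
      hence "p dvd Q c 1" unfolding qc by (intro dvd_add) simp_all
      then obtain k where k: "Q c 1 = p*k" by (auto elim: dvdE)
      have k0: "k > 0" using Qpos k p1 by (simp add: zero_less_mult_iff)
      have "p*k < p*p" using Qlt k by (simp add: power2_eq_square)
      hence kp: "k < p" using p1 by simp
      have "\<exists>r\<in>Ok. nm r = p"
        using descent[OF pp IH, of "nat k"] wO nwq k k0 kp by auto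
      thus ?thesis by simp
    qed
  qed
qed

lemma split_or_inert': "prime p \<Longrightarrow> inert p \<or> (\<exists>r\<in>Ok. nm r = p)"
  using split_or_inert by blast


lemma AA_finite: "finite (AA k)"
proof -
  define B where "B = 2*\<bar>k\<bar>+1"
  have sub: "AA k \<subseteq> (\<lambda>(a,b). of_int a + of_int b * th) ` ({-B..B} \<times> {-B..B})"
  proof
    fix z assume z: "z \<in> AA k"
    then obtain a b where ab: "z = of_int a + of_int b * th" unfolding AA_def by (auto elim: Ok_E)
    have Qk: "Q a b = k" using z ab nm_coord unfolding AA_def by simp
    have e4: "4*k = (2*a + t*b)^2 + (4*n - t^2) * b^2" using Q4[of a b] Qk by simp
    have b2: "b^2 \<le> (4*n - t^2) * b^2" using Dbig by (simp add: mult_le_cancel_right1)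
    have B2: "B^2 = 4*(\<bar>k\<bar>*\<bar>k\<bar>) + 4*\<bar>k\<bar> + 1" unfolding B_def by (simp add: power2_eq_square algebra_simps)
    have "0 \<le> \<bar>k\<bar>*\<bar>k\<bar>" by simp
    hence Bsq: "4*k \<le> B^2" using B2 by linarith
    have "b^2 \<le> B^2" using e4 b2 Bsq zero_le_power2[of "2*a+t*b"] by linarith
    hence bB: "\<bar>b\<bar> \<le> B" using abs_le_square_iff[of b B] B_def by simp
    have "(2*a+t*b)^2 \<le> B^2" using e4 Bsq zero_le_power2[of b] Dbig
      by (smt (verit) mult_nonneg_nonneg zero_le_power2)
    hence aB: "\<bar>2*a+t*b\<bar> \<le> B" using abs_le_square_iff[of "2*a+t*b" B] B_def by simp
    have "t = 0 \<or> t = 1" using t01 by linarith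
    hence "\<bar>t*b\<bar> \<le> \<bar>b\<bar>" by auto
    hence "\<bar>a\<bar> \<le> B" using aB bB by linarith
    thus "z \<in> (\<lambda>(a,b). of_int a + of_int b * th) ` ({-B..B} \<times> {-B..B})"
      using bB ab by (auto intro!: image_eqI[of _ _ "(a,b)"])
  qed
  show ?thesis by (rule finite_subset[OF sub]) auto
qed

lemma AA_one: "AA 1 = {1, -1}"
proof
  show "AA 1 \<subseteq> {1, -1}"
  proof
    fix z assume z: "z \<in> AA 1"
    then obtain a b where ab: "z = of_int a + of_int b * th" unfolding AA_def by (auto elim: Ok_E)
    have "Q a b = 1" using z ab nm_coord unfolding AA_def by simp
    hence "b = 0 \<and> (a = 1 \<or> a = -1)" by (rule Q_one)
    thus "z \<in> {1, -1}" using ab by auto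
  qed
next
  have "nm 1 = 1" "nm (-1) = 1" using nm_int[of 1] nm_int[of "-1"] by simp_all
  thus "{1, -1} \<subseteq> AA 1" unfolding AA_def by auto
qed

lemma SS_one: "SS 1 = 2"
proof -
  have "(1::complex) \<noteq> -1" by simp
  thus ?thesis unfolding SS_def AA_one by simp
qed

lemma sum_reindex: fixes r :: complex assumes "r \<noteq> 0" shows "(\<Sum>z\<in>(\<lambda>w. r*w) ` A. z^2) = r^2 * (\<Sum>w\<in>A. w^2)"
proof -
  have inj: "inj_on (\<lambda>w. r*w) A" by (intro inj_onI) (use assms in simp)
  have "(\<Sum>z\<in>(\<lambda>w. r*w) ` A. z^2) = (\<Sum>w\<in>A. (r*w)^2)" by (simp add: sum.reindex[OF inj])
  also have "\<dots> = r^2 * (\<Sum>w\<in>A. w^2)" by (simp add: power_mult_distrib sum_distrib_left)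
  finally show ?thesis .
qed

lemma dv_set:
  assumes r: "r \<in> Ok" "r \<noteq> 0" and d: "nm r dvd k"
  shows "{z\<in>AA k. dv r z} = (\<lambda>w. r*w) ` AA (k div nm r)"
proof
  have rp: "nm r > 0" using nm_pos r by simp
  show "{z\<in>AA k. dv r z} \<subseteq> (\<lambda>w. r*w) ` AA (k div nm r)"
  proof
    fix z assume "z \<in> {z\<in>AA k. dv r z}"
    then obtain w where w: "w \<in> Ok" "z = r*w" "nm z = k" unfolding AA_def dv_def by blast
    have "nm r * nm w = k" using w nm_mult[OF r(1) w(1)] by simp
    hence "nm w = k div nm r" using rp by (metis nonzero_mult_div_cancel_left less_irrefl)
    thus "z \<in> (\<lambda>w. r*w) ` AA (k div nm r)" using w unfolding AA_def by blast
  qed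
  show "(\<lambda>w. r*w) ` AA (k div nm r) \<subseteq> {z\<in>AA k. dv r z}"
  proof
    fix z assume "z \<in> (\<lambda>w. r*w) ` AA (k div nm r)"
    then obtain w where w: "w \<in> Ok" "z = r*w" "nm w = k div nm r" unfolding AA_def by blast
    have "nm z = k" using w nm_mult[OF r(1) w(1)] d by simp
    moreover have "dv r z" using w dv_multI by simp
    ultimately show "z \<in> {z\<in>AA k. dv r z}" using w r unfolding AA_def by auto
  qed
qed

lemma dv_set_empty:
  assumes r: "r \<in> Ok" and d: "\<not> nm r dvd k"
  shows "{z\<in>AA k. dv r z} = {}"
  using dv_nm[OF _ r] d unfolding AA_def by auto

lemma split_mem:
  assumes r: "r \<in> Ok" "prime (nm r)" and d: "nm r dvd k" and z: "z \<in> AA k"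
  shows "dv r z \<or> dv (cnj r) z"
proof -
  have zO: "z \<in> Ok" and nz: "nm z = k" using z unfolding AA_def by auto
  have wc: "z * cnj z = of_int k" using nm_conj[OF zO] nz by simp
  have d1: "dv r (of_int k)" by (rule dv_of_int_dvd[OF dv_norm[OF r(1)] d])
  have "dv r (z * cnj z)" unfolding wc by (rule d1)
  hence "dv r z \<or> dv r (cnj z)" using prime_elem[OF r zO Ok_cnj[OF zO]] by simp
  thus ?thesis
  proof
    assume "dv r (cnj z)" hence "dv (cnj r) (cnj (cnj z))" by (rule dv_cnj)
    thus ?thesis by simp
  qed simp
qed

lemma inter_dv:
  assumes r: "r \<in> Ok" "prime (nm r)" and nd: "\<not> dv r (cnj r)" and z: "z \<in> Ok"
  shows "(dv r z \<and> dv (cnj r) z) \<longleftrightarrow> dv (of_int (nm r)) z"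
proof
  assume "dv r z \<and> dv (cnj r) z"
  then obtain w where w: "w \<in> Ok" "z = r * w" and d2: "dv (cnj r) (r * w)" unfolding dv_def by auto
  have pr': "prime (nm (cnj r))" using r nm_cnj by simp
  have "dv (cnj r) r \<or> dv (cnj r) w" by (rule prime_elem[OF Ok_cnj[OF r(1)] pr' r(1) w(1) d2])
  thus "dv (of_int (nm r)) z"
  proof
    assume "dv (cnj r) r" hence "dv (cnj (cnj r)) (cnj r)" by (rule dv_cnj)
    thus ?thesis using nd by simp
  next
    assume "dv (cnj r) w"
    then obtain w2 where w2: "w2 \<in> Ok" "w = cnj r * w2" unfolding dv_def by blast
    have "z = (r * cnj r) * w2" using w w2 by (simp add: mult.assoc)
    hence "z = of_int (nm r) * w2" using nm_conj[OF r(1)] by simp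
    thus ?thesis using w2 unfolding dv_def by blast
  qed
next
  assume a: "dv (of_int (nm r)) z"
  have "dv r (of_int (nm r))" by (rule dv_norm[OF r(1)])
  moreover have "dv (cnj r) (of_int (nm r))" using dv_norm[OF Ok_cnj[OF r(1)]] nm_cnj by simp
  ultimately show "dv r z \<and> dv (cnj r) z" using a dv_trans by blast
qed

lemma AA_div:
  assumes r: "r \<in> Ok" "prime (nm r)" and z: "z \<in> AA (nm r * k)"
  shows "AA k \<noteq> {}"
proof -
  have "dv r z \<or> dv (cnj r) z" using split_mem[OF r _ z] by simp
  then obtain s where s: "s \<in> Ok" "nm s = nm r" "dv s z" using r Ok_cnj nm_cnj by blast
  then obtain w where w: "w \<in> Ok" "z = s * w" unfolding dv_def by blast
  have "nm r * nm w = nm r * k" using z w s nm_mult[OF s(1) w(1)] unfolding AA_def by simp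
  hence "nm w = k" using r(2) prime_gt_1_int by (metis less_irrefl mult_cancel_left zero_less_one less_trans)
  thus ?thesis using w unfolding AA_def by blast
qed


lemma nm_0: "nm 0 = 0" unfolding nm_def by simp

lemma REC:
  assumes r: "r \<in> Ok" "nm r = p" "prime p" and nd: "\<not> dv r (cnj r)" and pk: "p dvd k"
  shows "SS k = (r^2 + (cnj r)^2) * SS (k div p) - (if p^2 dvd k then (of_int p)^2 * SS (k div p^2) else 0)"
proof -
  have pr: "prime (nm r)" using r by simp
  have r0: "r \<noteq> 0" using r nm_0 by auto
  have cr: "cnj r \<in> Ok" "cnj r \<noteq> 0" "nm (cnj r) = p" using r r0 nm_cnj Ok_cnj by auto
  define A1 where "A1 = {z\<in>AA k. dv r z}"
  define A2 where "A2 = {z\<in>AA k. dv (cnj r) z}"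
  have U: "AA k = A1 \<union> A2" using split_mem[OF r(1) pr] pk r(2) unfolding A1_def A2_def by auto
  have I: "A1 \<inter> A2 = {z\<in>AA k. dv (of_int p) z}"
    using inter_dv[OF r(1) pr nd] r(2) unfolding A1_def A2_def AA_def by auto
  have fin: "finite A1" "finite A2" unfolding A1_def A2_def using AA_finite by auto
  have main: "SS k + sum (\<lambda>z. z^2) (A1 \<inter> A2) = sum (\<lambda>z. z^2) A1 + sum (\<lambda>z. z^2) A2"
    unfolding SS_def U by (rule sum.union_inter[OF fin])
  have S1: "sum (\<lambda>z. z^2) A1 = r^2 * SS (k div p)"
  proof -
    have "A1 = (\<lambda>w. r*w) ` AA (k div nm r)" unfolding A1_def by (rule dv_set[OF r(1) r0]) (use r(2) pk in simp)
    thus ?thesis using sum_reindex[OF r0] r(2) unfolding SS_def by simp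
  qed
  have S2: "sum (\<lambda>z. z^2) A2 = (cnj r)^2 * SS (k div p)"
  proof -
    have "A2 = (\<lambda>w. cnj r*w) ` AA (k div nm (cnj r))" unfolding A2_def by (rule dv_set[OF cr(1) cr(2)]) (use cr(3) pk in simp)
    thus ?thesis using sum_reindex[OF cr(2)] cr(3) unfolding SS_def by simp
  qed
  have p0: "(of_int p :: complex) \<noteq> 0" using r(3) prime_gt_1_int by force
  have S12: "sum (\<lambda>z. z^2) (A1 \<inter> A2) = (if p^2 dvd k then (of_int p)^2 * SS (k div p^2) else 0)"
  proof (cases "p^2 dvd k")
    case True
    have "A1 \<inter> A2 = (\<lambda>w. of_int p*w) ` AA (k div nm (of_int p))" unfolding I by (rule dv_set[OF Ok_int p0]) (use True nm_int in simp)
    thus ?thesis using sum_reindex[OF p0] True nm_int unfolding SS_def by simp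
  next
    case False
    have "A1 \<inter> A2 = {}" unfolding I by (rule dv_set_empty[OF Ok_int]) (use False nm_int in simp)
    thus ?thesis using False by simp
  qed
  show ?thesis using main S1 S2 S12 by (simp add: algebra_simps)
qed

lemma SPL:
  assumes r: "r \<in> Ok" "nm r = p" "prime p" and nd: "\<not> dv r (cnj r)" and m: "\<not> p dvd m"
  shows "SS (p^e * m) = FF (r^2) ((cnj r)^2) e * SS m \<and> SS (p^(Suc e) * m) = FF (r^2) ((cnj r)^2) (Suc e) * SS m"
proof (induction e)
  case 0
  have p1: "p > 1" using r(3) prime_gt_1_int by blast
  have "\<not> p^2 dvd p*m"
  proof
    assume "p^2 dvd p*m"
    hence "p*p dvd p*1*m" by (simp add: power2_eq_square)
    hence "p dvd m" using p1 by simp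
    thus False using m by simp
  qed
  moreover have "(p*m) div p = m" using p1 by simp
  ultimately have "SS (p*m) = (r^2 + (cnj r)^2) * SS m" using REC[OF r nd, of "p*m"] by simp
  thus ?case by simp
next
  case (Suc e)
  have p1: "p > 1" using r(3) prime_gt_1_int by blast
  define k where "k = p^(Suc (Suc e)) * m"
  have k1: "k = p * (p^(Suc e) * m)" unfolding k_def by (simp add: algebra_simps)
  have k2: "k = p^2 * (p^e * m)" unfolding k_def by (simp add: algebra_simps power2_eq_square)
  have d1: "k div p = p^(Suc e) * m" unfolding k1 using p1 by simp
  have d2: "k div p^2 = p^e * m" unfolding k2 using p1 by simp
  have "p dvd k" unfolding k1 by simp
  moreover have "p^2 dvd k" unfolding k2 by simp
  ultimately have "SS k = (r^2 + (cnj r)^2) * SS (p^(Suc e) * m) - (of_int p)^2 * SS (p^e * m)"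
    using REC[OF r nd, of k] d1 d2 by simp
  moreover have "(of_int p :: complex)^2 = r^2 * (cnj r)^2"
    using nm_conj[OF r(1)] r(2) by (simp add: power_mult_distrib[symmetric])
  ultimately have "SS k = FF (r^2) ((cnj r)^2) (Suc (Suc e)) * SS m"
    using Suc.IH by (simp add: algebra_simps)
  thus ?case using Suc.IH unfolding k_def by simp
qed

lemma FF_mod:
  assumes r: "r \<in> Ok"
  shows "(\<exists>u\<in>Ok. FF (r^2) ((cnj r)^2) e = ((cnj r)^2)^e + r*u) \<and>
         (\<exists>u\<in>Ok. FF (r^2) ((cnj r)^2) (Suc e) = ((cnj r)^2)^(Suc e) + r*u)"
proof (induction e)
  case 0
  have "FF (r^2) ((cnj r)^2) 0 = ((cnj r)^2)^0 + r*0" by simp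
  moreover have "FF (r^2) ((cnj r)^2) (Suc 0) = ((cnj r)^2)^(Suc 0) + r*r" by (simp add: power2_eq_square)
  ultimately show ?case using r Ok_0 by blast
next
  case (Suc e)
  then obtain u0 u1 where u0: "u0 \<in> Ok" "FF (r^2) ((cnj r)^2) e = ((cnj r)^2)^e + r*u0"
    and u1: "u1 \<in> Ok" "FF (r^2) ((cnj r)^2) (Suc e) = ((cnj r)^2)^(Suc e) + r*u1" by blast
  define a where "a = r^2"
  define b where "b = (cnj r)^2"
  have aO: "a \<in> Ok" and bO: "b \<in> Ok" unfolding a_def b_def power2_eq_square using r by auto
  define u where "u = (a+b)*u1 - a*b*u0"
  have uO: "u \<in> Ok" unfolding u_def using aO bO u0 u1 by auto
  have "FF a b (Suc (Suc e)) = (a + b) * (b^(Suc e) + r*u1) - a*b*(b^e + r*u0)"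
    using u0 u1 unfolding a_def b_def by simp
  also have "\<dots> = b^(Suc (Suc e)) + r*u" unfolding u_def by (simp add: algebra_simps)
  finally have "FF a b (Suc (Suc e)) = b^(Suc (Suc e)) + r*u" .
  hence "\<exists>u\<in>Ok. FF (r^2) ((cnj r)^2) (Suc (Suc e)) = ((cnj r)^2)^(Suc (Suc e)) + r*u"
    using uO unfolding a_def b_def by blast
  thus ?case using Suc.IH by blast
qed

lemma FF_nz:
  assumes r: "r \<in> Ok" "prime (nm r)" and nd: "\<not> dv r (cnj r)"
  shows "FF (r^2) ((cnj r)^2) e \<noteq> 0"
proof
  assume z: "FF (r^2) ((cnj r)^2) e = 0"
  obtain u where u: "u \<in> Ok" "FF (r^2) ((cnj r)^2) e = ((cnj r)^2)^e + r*u" using FF_mod[OF r(1), of e] by blast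
  have "((cnj r)^2)^e + r*u = 0" using z u(2) by simp
  hence "((cnj r)^2)^e = - (r*u)" by (simp add: eq_neg_iff_add_eq_0)
  hence "cnj r ^ (2*e) = r * (-u)" by (simp add: power_mult)
  hence "dv r (cnj r ^ (2*e))" using u(1) unfolding dv_def by blast
  hence "dv r (cnj r)" by (rule prime_elem_pow[OF r Ok_cnj[OF r(1)]])
  thus False using nd by simp
qed

lemma AA_pow:
  assumes r: "r \<in> Ok" "nm r = p" "prime p"
  shows "AA (p^e * m) \<noteq> {} \<Longrightarrow> AA m \<noteq> {}"
proof (induction e)
  case 0 thus ?case by simp
next
  case (Suc e)
  then obtain z where "z \<in> AA (nm r * (p^e * m))" using r(2) by (auto simp: algebra_simps)
  hence "AA (p^e * m) \<noteq> {}" using AA_div[OF r(1)] r by simp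
  thus ?case using Suc.IH by simp
qed

lemma SS_nz: "\<forall>k. nat k = N \<longrightarrow> k \<ge> 1 \<longrightarrow> AA k \<noteq> {} \<longrightarrow> SS k \<noteq> 0"
proof (induction N rule: less_induct)
  case (less N)
  show ?case
  proof (intro allI impI)
    fix k assume N: "nat k = N" and k1: "k \<ge> 1" and ne: "AA k \<noteq> {}"
    have IH: "SS k' \<noteq> 0" if "1 \<le> k'" "k' < k" "AA k' \<noteq> {}" for k'
    proof -
      have "nat k' < N" using N that by simp
      thus ?thesis using less.IH that by blast
    qed
    show "SS k \<noteq> 0"
    proof (cases "k = 1")
      case True thus ?thesis using SS_one by simp
    next
      case False
      have "\<not> is_unit k" using False k1 by simp
      then obtain p where p: "p dvd k" "prime p" using prime_divisor_exists[of k] k1 by auto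
      have p1: "p > 1" using prime_gt_1_int p(2) .
      have p0: "(of_int p :: complex) \<noteq> 0" using p1 by simp
      from split_or_inert'[OF p(2)] show ?thesis
      proof
        assume ip: "inert p"
        obtain z0 where z0: "z0 \<in> AA k" using ne by blast
        have z0O: "z0 \<in> Ok" and nz0: "nm z0 = k" using z0 unfolding AA_def by auto
        have "dv (of_int p) z0" using ip z0O nz0 p(1) unfolding inert_def by auto
        hence "nm (of_int p) dvd nm z0" by (rule dv_nm[OF _ Ok_int])
        hence pk: "p^2 dvd k" using nm_int nz0 by simp
        have allp: "AA k = {z\<in>AA k. dv (of_int p) z}" using ip p(1) unfolding inert_def AA_def by auto
        have eq: "AA k = (\<lambda>w. of_int p * w) ` AA (k div p^2)"
          using allp dv_set[OF Ok_int p0, of k] pk nm_int by simp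
        have "SS k = (\<Sum>z\<in>(\<lambda>w. of_int p * w) ` AA (k div p^2). z^2)" unfolding SS_def using eq by simp
        also have "\<dots> = (of_int p)^2 * SS (k div p^2)" by (simp add: sum_reindex[OF p0] SS_def)
        finally have S: "SS k = (of_int p)^2 * SS (k div p^2)" .
        obtain j where j: "k = p^2 * j" using pk by (auto elim: dvdE)
        have "1 * 1 < p * p" by (rule mult_strict_mono) (use p1 in auto)
        hence p2: "p^2 > 1" by (simp add: power2_eq_square)
        have j1: "j \<ge> 1"
        proof (rule ccontr)
          assume "\<not> j \<ge> 1" hence "j \<le> 0" by simp
          hence "p^2 * j \<le> 0" by (intro mult_nonneg_nonpos) simp_all
          thus False using j k1 by simp
        qed
        have "1 * j < p^2 * j" by (rule mult_strict_right_mono) (use p2 j1 in auto)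
        hence jk: "j < k" using j by simp
        have jd: "k div p^2 = j" using j p1 by simp
        have "AA j \<noteq> {}" using eq ne jd by auto
        hence "SS j \<noteq> 0" using IH j1 jk by blast
        thus ?thesis using S jd p0 by simp
      next
        assume "\<exists>r\<in>Ok. nm r = p"
        then obtain r where r: "r \<in> Ok" "nm r = p" by blast
        have pr: "prime (nm r)" using r p by simp
        have r0: "r \<noteq> 0" using r nm_0 p1 by auto
        show ?thesis
        proof (cases "dv r (cnj r)")
          case True
          have allr: "AA k = {z\<in>AA k. dv r z}"
          proof -
            have "dv r z" if "z \<in> AA k" for z
              using split_mem[OF r(1) pr _ that] p(1) r(2) True dv_trans by auto
            thus ?thesis by auto
          qed
          have eq: "AA k = (\<lambda>w. r * w) ` AA (k div p)"
            using allr dv_set[OF r(1) r0, of k] p(1) r(2) by simp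
          have "SS k = (\<Sum>z\<in>(\<lambda>w. r * w) ` AA (k div p). z^2)" unfolding SS_def using eq by simp
          also have "\<dots> = r^2 * SS (k div p)" by (simp add: sum_reindex[OF r0] SS_def)
          finally have S: "SS k = r^2 * SS (k div p)" .
          obtain j where j: "k = p * j" using p(1) by (auto elim: dvdE)
          have j1: "j \<ge> 1"
          proof (rule ccontr)
            assume "\<not> j \<ge> 1" hence "j \<le> 0" by simp
            hence "p * j \<le> 0" using p1 by (intro mult_nonneg_nonpos) simp_all
            thus False using j k1 by simp
          qed
          have "1 * j < p * j" by (rule mult_strict_right_mono) (use p1 j1 in auto)
          hence jk: "j < k" using j by simp
          have jd: "k div p = j" using j p1 by simp
          have "AA j \<noteq> {}" using eq ne jd by auto
          hence "SS j \<noteq> 0" using IH j1 jk by blast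
          thus ?thesis using S jd r0 by simp
        next
          case False
          have "k \<noteq> 0" "\<not> is_unit p" using k1 p1 by auto
          then obtain m where m: "k = p ^ multiplicity p k * m" "\<not> p dvd m"
            using multiplicity_decompose'[of k p] by metis
          define e where "e = multiplicity p k"
          have km: "k = p^e * m" using m unfolding e_def by simp
          have e0: "e \<noteq> 0"
          proof
            assume "e = 0" hence "k = m" using km by simp
            thus False using m(2) p(1) by simp
          qed
          have pe: "p^e > 0" using p1 by simp
          have m1: "m \<ge> 1"
          proof (rule ccontr)
            assume "\<not> m \<ge> 1" hence "m \<le> 0" by simp
            hence "p^e * m \<le> 0" using pe by (intro mult_nonneg_nonpos) simp_all
            thus False using km k1 by simp
          qed
          have "p^1 \<le> p^e" by (rule power_increasing) (use e0 p1 in auto)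
          hence "p*m \<le> p^e*m" using m1 by (intro mult_right_mono) simp_all
          moreover have "1 * m < p * m" by (rule mult_strict_right_mono) (use p1 m1 in auto)
          ultimately have mk: "m < k" using km by simp
          have "AA m \<noteq> {}" using AA_pow[OF r p(2), of e m] ne km by simp
          hence Sm: "SS m \<noteq> 0" using IH m1 mk by blast
          have "SS k = FF (r^2) ((cnj r)^2) e * SS m" using SPL[OF r p(2) False m(2), of e] km by simp
          thus ?thesis using Sm FF_nz[OF r(1) pr False] by simp
        qed
      qed
    qed
  qed
qed

lemma main_nz:
  assumes m: "(m::real) > 0" and ne: "{x\<in>Ok. (cmod x)^2 = m} \<noteq> {}"
  shows "finite {x\<in>Ok. (cmod x)^2 = m} \<and> (\<Sum>x\<in>{x\<in>Ok. (cmod x)^2 = m}. x^2) \<noteq> 0"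
proof -
  obtain z where z: "z \<in> Ok" "(cmod z)^2 = m" using ne by blast
  define k where "k = nm z"
  have mk: "m = of_int k" using nm_real[OF z(1)] z(2) unfolding k_def by simp
  have k1: "k \<ge> 1" using m mk by simp
  have eq: "{x\<in>Ok. (cmod x)^2 = m} = AA k"
    unfolding AA_def mk using nm_real by auto
  have "AA k \<noteq> {}" using ne eq by simp
  hence "SS k \<noteq> 0" using SS_nz k1 by blast
  thus ?thesis unfolding eq SS_def using AA_finite by simp
qed


lemma main_nz2:
  assumes "th = theta d" "m > 0" "shell d m \<noteq> {}"
  shows "(\<Sum>x\<in>shell d m. x^2) \<noteq> 0"
proof -
  have e: "shell d m = {x\<in>Ok. (cmod x)^2 = m}"
    unfolding shell_def OK_lattice_def Ok_def using assms(1) by simp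
  show ?thesis using main_nz[OF assms(2)] assms(3) unfolding e by blast
qed

end

lemma ftc_helper:
  assumes "\<And>x. (f has_real_derivative f' x) (at x)"
  shows "(f' has_integral (f (2*pi) - f 0)) {0..2*pi}"
proof (rule fundamental_theorem_of_calculus)
  show "0 \<le> 2*pi" by simp
  fix x :: real assume "x \<in> {0..2*pi}"
  show "(f has_vector_derivative f' x) (at x within {0..2*pi})"
    using assms[of x] by (simp add: has_real_derivative_iff_has_vector_derivative has_vector_derivative_at_within)
qed

lemma I20: "integral {0..2*pi} (\<lambda>\<phi>. cos \<phi> ^ 2 * sin \<phi> ^ 0) = pi"
proof -
  define F where "F = (\<lambda>x::real. x/2 + sin (2*x)/4)"
  have "((\<lambda>x. cos x ^ 2) has_integral (F (2*pi) - F 0)) {0..2*pi}"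
  proof (rule ftc_helper)
    fix x :: real
    have "(F has_real_derivative (1/2 + cos (2*x) * 2 / 4)) (at x)"
      unfolding F_def by (auto intro!: derivative_eq_intros)
    moreover have "1/2 + cos (2*x) * 2 / 4 = cos x ^ 2"
      unfolding cos_double_cos by (simp add: field_simps)
    ultimately show "(F has_real_derivative cos x ^ 2) (at x)" by simp
  qed
  moreover have "F (2*pi) - F 0 = pi" unfolding F_def by simp
  ultimately show ?thesis by (simp add: integral_unique)
qed

lemma I02: "integral {0..2*pi} (\<lambda>\<phi>. cos \<phi> ^ 0 * sin \<phi> ^ 2) = pi"
proof -
  define F where "F = (\<lambda>x::real. x/2 - sin (2*x)/4)"
  have "((\<lambda>x. sin x ^ 2) has_integral (F (2*pi) - F 0)) {0..2*pi}"
  proof (rule ftc_helper)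
    fix x :: real
    have "(F has_real_derivative (1/2 - cos (2*x) * 2 / 4)) (at x)"
      unfolding F_def by (auto intro!: derivative_eq_intros)
    moreover have "1/2 - cos (2*x) * 2 / 4 = sin x ^ 2"
      unfolding cos_double_sin by (simp add: field_simps)
    ultimately show "(F has_real_derivative sin x ^ 2) (at x)" by simp
  qed
  moreover have "F (2*pi) - F 0 = pi" unfolding F_def by simp
  ultimately show ?thesis by (simp add: integral_unique)
qed

lemma I11: "integral {0..2*pi} (\<lambda>\<phi>. cos \<phi> ^ 1 * sin \<phi> ^ 1) = 0"
proof -
  define F where "F = (\<lambda>x::real. sin x ^ 2 / 2)"
  have "((\<lambda>x. cos x * sin x) has_integral (F (2*pi) - F 0)) {0..2*pi}"
  proof (rule ftc_helper)
    fix x :: real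
    have "(F has_real_derivative (real 2 * sin x ^ (2 - 1) * cos x / 2)) (at x)"
      unfolding F_def by (auto intro!: derivative_eq_intros)
    thus "(F has_real_derivative cos x * sin x) (at x)" by (simp add: mult.commute)
  qed
  moreover have "F (2*pi) - F 0 = 0" unfolding F_def by simp
  ultimately show ?thesis by (simp add: integral_unique)
qed

lemma design_sum_zero:
  assumes d: "spherical_design_radius 2 (sqrt m) X" and m: "m > 0"
  shows "(\<Sum>x\<in>X. x^2) = 0"
proof -
  define Y where "Y = (\<lambda>x. x / complex_of_real (sqrt m)) ` X"
  have sd: "spherical_design 2 Y" using d unfolding spherical_design_radius_def Y_def by simp
  hence fY: "finite Y" and neY: "Y \<noteq> {}" and
    cond: "\<And>i j. i + j \<le> 2 \<Longrightarrow> (1 / real (card Y)) * (\<Sum>x\<in>Y. Re x ^ i * Im x ^ j)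
        = (1 / (2 * pi)) * integral {0..2*pi} (\<lambda>\<phi>. cos \<phi> ^ i * sin \<phi> ^ j)"
    unfolding spherical_design_def by auto
  have cY: "real (card Y) > 0" using fY neY by (simp add: card_gt_0_iff)
  have h20: "(1 / real (card Y)) * (\<Sum>x\<in>Y. Re x ^ 2 * Im x ^ 0) = (1 / (2 * pi)) * pi"
    using cond[of 2 0] I20 by simp
  have h02: "(1 / real (card Y)) * (\<Sum>x\<in>Y. Re x ^ 0 * Im x ^ 2) = (1 / (2 * pi)) * pi"
    using cond[of 0 2] I02 by simp
  have h11: "(1 / real (card Y)) * (\<Sum>x\<in>Y. Re x ^ 1 * Im x ^ 1) = 0"
    using cond[of 1 1] I11 by simp
  have s1: "(\<Sum>x\<in>Y. Re x ^ 2) = (\<Sum>x\<in>Y. Im x ^ 2)" using h20 h02 cY by simp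
  have s2: "(\<Sum>x\<in>Y. Re x * Im x) = 0" using h11 cY by simp
  have Ys: "(\<Sum>y\<in>Y. y^2) = 0"
  proof (rule complex_eqI)
    have "Re (\<Sum>y\<in>Y. y^2) = (\<Sum>y\<in>Y. Re y ^ 2 - Im y ^ 2)" by (simp add: Re_sum power2_eq_square)
    also have "\<dots> = 0" using s1 by (simp add: sum_subtractf)
    finally show "Re (\<Sum>y\<in>Y. y^2) = Re 0" by simp
    have s2': "(\<Sum>y\<in>Y. Im y * Re y) = 0" using s2 by (simp add: mult.commute)
    have "Im (\<Sum>y\<in>Y. y^2) = (\<Sum>y\<in>Y. 2 * (Im y * Re y))" by (simp add: Im_sum power2_eq_square)
    also have "\<dots> = 0" using s2' by (simp add: sum_distrib_left[symmetric])
    finally show "Im (\<Sum>y\<in>Y. y^2) = Im 0" by simp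
  qed
  have sm: "complex_of_real (sqrt m) \<noteq> 0" using m by simp
  have inj: "inj_on (\<lambda>x. x / complex_of_real (sqrt m)) X" by (intro inj_onI) (use sm in simp)
  have "(\<Sum>y\<in>Y. y^2) = (\<Sum>x\<in>X. (x / complex_of_real (sqrt m))^2)" unfolding Y_def by (simp add: sum.reindex[OF inj])
  also have "\<dots> = (\<Sum>x\<in>X. x^2) / complex_of_real m"
    using m by (simp add: power_divide sum_divide_distrib power2_eq_square flip: of_real_mult)
  finally have "(\<Sum>x\<in>X. x^2) / complex_of_real m = 0" using Ys by simp
  thus ?thesis using m by simp
qed


lemma small_check:
  fixes p n x y :: int
  assumes p: "p > 0" and d: "p dvd (x^2 + 1*x*y + n*y^2)"
    and tab: "\<forall>a\<in>{0..<p}. \<forall>b\<in>{0..<p}. p dvd (a^2 + a*b + n*b^2) \<longrightarrow> b = 0"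
  shows "p dvd y"
proof -
  define a where "a = x mod p"
  define b where "b = y mod p"
  define q1 where "q1 = x div p"
  define q2 where "q2 = y div p"
  have xa: "x = a + p*q1" unfolding a_def q1_def by simp
  have yb: "y = b + p*q2" unfolding b_def q2_def by simp
  have "x^2 + 1*x*y + n*y^2 = (a^2 + a*b + n*b^2) + p*(2*a*q1 + p*q1^2 + a*q2 + q1*b + p*q1*q2 + n*(2*b*q2 + p*q2^2))"
    unfolding xa yb by (simp add: algebra_simps power2_eq_square)
  hence "a^2 + a*b + n*b^2 = (x^2 + 1*x*y + n*y^2) - p*(2*a*q1 + p*q1^2 + a*q2 + q1*b + p*q1*q2 + n*(2*b*q2 + p*q2^2))"
    by simp
  moreover have "p dvd (x^2 + 1*x*y + n*y^2) - p*(2*a*q1 + p*q1^2 + a*q2 + q1*b + p*q1*q2 + n*(2*b*q2 + p*q2^2))"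
    using d by (intro dvd_diff) simp_all
  ultimately have "p dvd (a^2 + a*b + n*b^2)" by simp
  moreover have "a \<in> {0..<p}" "b \<in> {0..<p}" unfolding a_def b_def using p by auto
  ultimately have "b = 0" using tab by blast
  thus ?thesis unfolding b_def by (simp add: dvd_eq_mod_eq_0)
qed

lemma prime_le:
  fixes p :: int
  assumes "prime p" "3*p^2 \<le> d" "3*(B+1)^2 > d" "B \<ge> 0"
  shows "p \<le> B"
proof (rule ccontr)
  assume "\<not> p \<le> B"
  hence "(B+1)*(B+1) \<le> p*p" using assms(4) by (intro mult_mono) auto
  thus False using assms(2,3) by (simp add: power2_eq_square)
qed

lemma not_prime_4: "\<not> prime (4::int)"
  unfolding prime_int_iff by (auto intro!: exI[of _ 2])
lemma not_prime_6: "\<not> prime (6::int)"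
  unfolding prime_int_iff by (auto intro!: exI[of _ 2])

lemma qf1:
  fixes d n :: int
  assumes d4: "d > 4" and dm: "(-d) mod 4 = 1" and n: "4*n = d+1"
    and sm: "\<And>p x y. prime p \<Longrightarrow> 3*p^2 \<le> d \<Longrightarrow> p dvd (x^2 + 1*x*y + n*y^2) \<Longrightarrow> p dvd y"
  shows "qf 1 n (theta d)"
proof -
  define s where "s = sqrt (real_of_int d)"
  have ss: "s * s = real_of_int d" using d4 unfolding s_def by simp
  have sp: "s > 0" using d4 unfolding s_def by simp
  have "(- d) mod 4 \<notin> {2, 3}" using dm by simp
  hence th: "theta d = (1 + \<i> * complex_of_real s)/2" unfolding theta_def s_def by (simp only: if_False)
  have nr: "real_of_int n = (real_of_int d + 1)/4"
  proof -
    have "real_of_int (4*n) = real_of_int (d+1)" using n by simp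
    thus ?thesis by simp
  qed
  show ?thesis
  proof (unfold_locales)
    have ReT: "Re (theta d) = 1/2" and ImT: "Im (theta d) = s/2" unfolding th by simp_all
    have sq: "s^2 = real_of_int d" using ss by (simp add: power2_eq_square)
    show "(theta d)^2 = of_int 1 * theta d - of_int n"
    proof (rule complex_eqI)
      have "Re ((theta d)^2) = (1/2)^2 - (s/2)^2" by (simp add: Re_power2 ReT ImT)
      also have "\<dots> = 1/4 - s^2/4" by (simp add: power_divide)
      also have "\<dots> = 1/2 - real_of_int n" using sq nr by simp
      also have "\<dots> = Re (of_int 1 * theta d - of_int n)" using ReT by simp
      finally show "Re ((theta d)^2) = Re (of_int 1 * theta d - of_int n)" .
      have "Im ((theta d)^2) = 2 * (1/2) * (s/2)" by (simp add: Im_power2 ReT ImT)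
      also have "\<dots> = Im (of_int 1 * theta d - of_int n)" using ImT by simp
      finally show "Im ((theta d)^2) = Im (of_int 1 * theta d - of_int n)" .
    qed
    show "cnj (theta d) = of_int 1 - theta d" unfolding th by (simp add: complex_eq_iff)
    show "Im (theta d) \<noteq> 0" unfolding th using sp by simp
    show "4*n - 1^2 > (4::int)" using n d4 by (simp only: one_power2)
    show "(0::int) \<le> 1" "(1::int) \<le> 1" by simp_all
    fix p x y :: int
    assume a: "prime p" "3*p^2 \<le> 4*n - 1^2" "p dvd (x^2 + 1*x*y + n*y^2)"
    have "3*p^2 \<le> d" using a(2) n by simp
    thus "p dvd y" using sm[OF a(1) _ a(3)] by blast
  qed
qed

lemma qf2: "qf 0 2 (theta 2)"
proof -
  have th: "theta 2 = \<i> * complex_of_real (sqrt 2)" unfolding theta_def by simp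
  show ?thesis
  proof (unfold_locales)
    have ReT: "Re (theta 2) = 0" and ImT: "Im (theta 2) = sqrt 2" unfolding th by simp_all
    show "(theta 2)^2 = of_int 0 * theta 2 - of_int 2"
    proof (rule complex_eqI)
      show "Re ((theta 2)^2) = Re (of_int 0 * theta 2 - of_int 2)" by (simp add: Re_power2 ReT ImT)
      show "Im ((theta 2)^2) = Im (of_int 0 * theta 2 - of_int 2)" by (simp add: Im_power2 ReT ImT)
    qed
    show "cnj (theta 2) = of_int 0 - theta 2" unfolding th by (simp add: complex_eq_iff)
    show "Im (theta 2) \<noteq> 0" unfolding th by simp
    show "4*2 - 0^2 > (4::int)" by simp
    show "(0::int) \<le> 0" "(0::int) \<le> 1" by simp_all
    fix p x y :: int
    assume p: "prime p" "3*p^2 \<le> 4*2 - 0^2"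
    have "p \<le> 1" by (rule prime_le[OF p(1), of 8]) (use p(2) in simp_all)
    thus "p dvd y" using prime_gt_1_int[OF p(1)] by simp
  qed
qed

lemma tab2: "n mod 2 = 1 \<Longrightarrow> \<forall>a\<in>{0..<2}. \<forall>b\<in>{0..<2}. (2::int) dvd (a^2 + a*b + n*b^2) \<longrightarrow> b = 0"
proof -
  assume "n mod 2 = 1"
  moreover have "{0..<(2::int)} = {0,1}" by auto
  ultimately show ?thesis by (auto simp: dvd_eq_mod_eq_0 mod_simps)
qed

lemma qf7: "qf 1 2 (theta 7)"
proof (rule qf1)
  fix p x y :: int assume "prime p" "3*p^2 \<le> 7"
  have "p \<le> 1" by (rule prime_le[OF \<open>prime p\<close>, of 7]) (use \<open>3*p^2 \<le> 7\<close> in simp_all)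
  thus "p dvd y" using prime_gt_1_int[OF \<open>prime p\<close>] by simp
qed simp_all

lemma qf11: "qf 1 3 (theta 11)"
proof (rule qf1)
  fix p x y :: int assume "prime p" "3*p^2 \<le> 11"
  have "p \<le> 1" by (rule prime_le[OF \<open>prime p\<close>, of 11]) (use \<open>3*p^2 \<le> 11\<close> in simp_all)
  thus "p dvd y" using prime_gt_1_int[OF \<open>prime p\<close>] by simp
qed simp_all

lemma qf19: "qf 1 5 (theta 19)"
proof (rule qf1)
  fix p x y :: int assume pp: "prime p" "3*p^2 \<le> 19" and d: "p dvd (x^2 + 1*x*y + 5*y^2)"
  have "p \<le> 2" by (rule prime_le[OF pp(1), of 19]) (use pp(2) in simp_all)
  moreover have "p > 1" using prime_gt_1_int[OF pp(1)] .
  ultimately have "p = 2" by simp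
  thus "p dvd y" using small_check[of p x y 5] d tab2[of 5] by simp
qed simp_all

lemma qf43: "qf 1 11 (theta 43)"
proof (rule qf1)
  fix p x y :: int assume pp: "prime p" "3*p^2 \<le> 43" and d: "p dvd (x^2 + 1*x*y + 11*y^2)"
  have "p \<le> 3" by (rule prime_le[OF pp(1), of 43]) (use pp(2) in simp_all)
  moreover have "p > 1" using prime_gt_1_int[OF pp(1)] .
  ultimately have "p = 2 \<or> p = 3" by presburger
  moreover have "{0..<(3::int)} = {0,1,2}" by auto
  ultimately show "p dvd y" using small_check[of p x y 11] d tab2[of 11] by auto
qed simp_all

lemma qf67: "qf 1 17 (theta 67)"
proof (rule qf1)
  fix p x y :: int assume pp: "prime p" "3*p^2 \<le> 67" and d: "p dvd (x^2 + 1*x*y + 17*y^2)"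
  have "p \<le> 4" by (rule prime_le[OF pp(1), of 67]) (use pp(2) in simp_all)
  moreover have "p > 1" using prime_gt_1_int[OF pp(1)] .
  moreover have "p \<noteq> 4" using not_prime_4 pp(1) by auto
  ultimately have "p = 2 \<or> p = 3" by presburger
  moreover have "{0..<(3::int)} = {0,1,2}" by auto
  ultimately show "p dvd y" using small_check[of p x y 17] d tab2[of 17] by auto
qed simp_all

lemma qf163: "qf 1 41 (theta 163)"
proof (rule qf1)
  fix p x y :: int assume pp: "prime p" "3*p^2 \<le> 163" and d: "p dvd (x^2 + 1*x*y + 41*y^2)"
  have "p \<le> 7" by (rule prime_le[OF pp(1), of 163]) (use pp(2) in simp_all)
  moreover have "p > 1" using prime_gt_1_int[OF pp(1)] .
  moreover have "p \<noteq> 4" "p \<noteq> 6" using not_prime_4 not_prime_6 pp(1) by auto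
  ultimately have "p = 2 \<or> p = 3 \<or> p = 5 \<or> p = 7" by presburger
  moreover have "{0..<(3::int)} = {0,1,2}" "{0..<(5::int)} = {0,1,2,3,4}" "{0..<(7::int)} = {0,1,2,3,4,5,6}" by auto
  ultimately show "p dvd y" using small_check[of p x y 41] d tab2[of 41] by auto
qed simp_all

theorem theorem1p3:
  fixes d :: int and m :: real
  assumes "d \<in> {2, 7, 11, 19, 43, 67, 163}"
    and "m > 0"
    and "shell d m \<noteq> {}"
  shows "\<not> spherical_design_radius 2 (sqrt m) (shell d m)"
proof
  assume des: "spherical_design_radius 2 (sqrt m) (shell d m)"
  have z: "(\<Sum>x\<in>shell d m. x^2) = 0" by (rule design_sum_zero[OF des assms(2)])
  have "\<exists>t n. qf t n (theta d)" using assms(1) qf2 qf7 qf11 qf19 qf43 qf67 qf163 by auto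
  then obtain t n where q: "qf t n (theta d)" by blast
  have "(\<Sum>x\<in>shell d m. x^2) \<noteq> 0" by (rule qf.main_nz2[OF q refl assms(2,3)])
  thus False using z by simp
qed

end
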